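(* Let $(G,\ell)$ be a connected undirected network in which every edge has length at least $1$, with $n$ vertices, highway dimension $h$ and diameter $D$. Then the labeling $L$ produced by the distance greedy algorithm d-HHL satisfies $|L(v)| = O(h\log n\log D)$ for every vertex $v$.
   Context: Let $G=(V,E)$ be an undirected graph with edge lengths $\ell$, $n=|V|$, $\mathrm{dist}$ the shortest-path distance. A hub labeling assigns to each $v$ a set $L(v)\subseteq V$ of hubs such that for every pair $u,w$ the set $L(u)\cap L(w)$ contains a vertex on some shortest $u$–$w$ path; $|L(v)|$ is the number of hubs of $v$. d-HHL: start with all labels empty; an unordered pair $[u,w]$ (including $u=w$) is covered if $L(u)\cap L(w)$ contains a vertex on a shortest $u$–$w$ path, and $U$ is the set of uncovered pairs. Each pair gets weight $W(u,w)=0$ if $\mathrm{dist}(u,w)=0$ and $W(u,w)=n^{2\lfloor\log_2\mathrm{dist}(u,w)\rfloor}$ otherwise. For each not-yet-selected vertex $v$, its center graph is the graph on $V$ with an edge (self-loop if $u=w$) $\{u,w\}$ for every $[u,w]\in U$ having some shortest $u$–$w$ path through $v$. In each iteration the algorithm selects a not-yet-selected vertex $v$ whose center graph has maximum total edge weight (ties broken arbitrarily), and adds $v$ to $L(u)$ for every non-isolated vertex $u$ of that center graph; it repeats until all pairs are covered. Highway dimension: for a shortest path $P=(v_1,\dots,v_k)$ and $r>0$, a shortest path $P'$ is an $r$-witness for $P$ if $\ell(P')>r$ and $P'$ is $P$ extended by at most one vertex at each end. $P$ is $r$-significant if it has an $r$-witness; $\mathcal P_r$ is the set of such paths. $P$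 is $(r,d)$-close to $v$ if it has an $r$-witness $P'$ with $\min_{w\in P'}\mathrm{dist}(v,w)\le d$. $S_r(v)$ is the set of $P\in\mathcal P_r$ that are $(r,2r)$-close to $v$. The highway dimension is the smallest $h$ such that for all $r>0$, $v\in V$ there is a set of at most $h$ vertices meeting every path of $S_r(v)$. *)

theory Defs
  imports Complex_Main
begin

definition wf_network :: "nat set \<Rightarrow> nat set set \<Rightarrow> (nat set \<Rightarrow> real) \<Rightarrow> bool" where
  "wf_network V E ell \<longleftrightarrow> finite V \<and>
     (\<forall>e\<in>E. \<exists>x y. e = {x, y} \<and> x \<noteq> y \<and> x \<in> V \<and> y \<in> V)"

definition walk :: "nat set \<Rightarrow> nat set set \<Rightarrow> nat list \<Rightarrow> bool" where
  "walk V E P \<longleftrightarrow> P \<noteq> [] \<and> set P \<subseteq> V \<and>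
     (\<forall>i. Suc i < length P \<longrightarrow> {P ! i, P ! Suc i} \<in> E)"

definition walk_len :: "(nat set \<Rightarrow> real) \<Rightarrow> nat list \<Rightarrow> real" where
  "walk_len ell P = (\<Sum>i<length P - 1. ell {P ! i, P ! Suc i})"

definition connected_net :: "nat set \<Rightarrow> nat set set \<Rightarrow> bool" where
  "connected_net V E \<longleftrightarrow> (\<forall>u\<in>V. \<forall>w\<in>V. \<exists>P. walk V E P \<and> hd P = u \<and> last P = w)"

definition dist :: "nat set \<Rightarrow> nat set set \<Rightarrow> (nat set \<Rightarrow> real) \<Rightarrow> nat \<Rightarrow> nat \<Rightarrow> real" where
  "dist V E ell u w = Inf {walk_len ell P | P. walk V E P \<and> hd P = u \<and> last P = w}"

definition shortest_path :: "nat set \<Rightarrow> nat set set \<Rightarrow> (nat set \<Rightarrow> real) \<Rightarrow> nat \<Rightarrow> nat \<Rightarrow> nat list \<Rightarrow> bool" where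
  "shortest_path V E ell u w P \<longleftrightarrow> walk V E P \<and> hd P = u \<and> last P = w \<and>
     walk_len ell P = dist V E ell u w"

definition is_shortest :: "nat set \<Rightarrow> nat set set \<Rightarrow> (nat set \<Rightarrow> real) \<Rightarrow> nat list \<Rightarrow> bool" where
  "is_shortest V E ell P \<longleftrightarrow> shortest_path V E ell (hd P) (last P) P"

definition diameter :: "nat set \<Rightarrow> nat set set \<Rightarrow> (nat set \<Rightarrow> real) \<Rightarrow> real" where
  "diameter V E ell = Max {dist V E ell u w | u w. u \<in> V \<and> w \<in> V}"

definition covered :: "nat set \<Rightarrow> nat set set \<Rightarrow> (nat set \<Rightarrow> real) \<Rightarrow> (nat \<Rightarrow> nat set) \<Rightarrow> nat \<Rightarrow> nat \<Rightarrow> bool" where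
  "covered V E ell L u w \<longleftrightarrow>
     (\<exists>x \<in> L u \<inter> L w. \<exists>P. shortest_path V E ell u w P \<and> x \<in> set P)"

text \<open>Unordered pairs [u,w] (including u = w) are represented by the sets {u,w}.\<close>
definition uncovered :: "nat set \<Rightarrow> nat set set \<Rightarrow> (nat set \<Rightarrow> real) \<Rightarrow> (nat \<Rightarrow> nat set) \<Rightarrow> nat set set" where
  "uncovered V E ell L = {{u, w} | u w. u \<in> V \<and> w \<in> V \<and> \<not> covered V E ell L u w}"

definition pair_weight :: "nat set \<Rightarrow> nat set set \<Rightarrow> (nat set \<Rightarrow> real) \<Rightarrow> nat \<Rightarrow> nat \<Rightarrow> real" where
  "pair_weight V E ell u w =
     (if dist V E ell u w = 0 then 0
      else real (card V) ^ (2 * nat \<lfloor>log 2 (dist V E ell u w)\<rfloor>))"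

definition center_edges :: "nat set \<Rightarrow> nat set set \<Rightarrow> (nat set \<Rightarrow> real) \<Rightarrow> (nat \<Rightarrow> nat set) \<Rightarrow> nat \<Rightarrow> nat set set" where
  "center_edges V E ell L v =
     {{u, w} | u w. u \<in> V \<and> w \<in> V \<and> \<not> covered V E ell L u w \<and>
        (\<exists>P. shortest_path V E ell u w P \<and> v \<in> set P)}"

definition center_weight :: "nat set \<Rightarrow> nat set set \<Rightarrow> (nat set \<Rightarrow> real) \<Rightarrow> (nat \<Rightarrow> nat set) \<Rightarrow> nat \<Rightarrow> real" where
  "center_weight V E ell L v =
     (\<Sum>p\<in>center_edges V E ell L v. pair_weight V E ell (Min p) (Max p))"

text \<open>One iteration of d-HHL on state (L, S), S = already selected vertices.\<close>
definition dHHL_step :: "nat set \<Rightarrow> nat set set \<Rightarrow> (nat set \<Rightarrow> real) \<Rightarrow>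
    (nat \<Rightarrow> nat set) \<times> nat set \<Rightarrow> (nat \<Rightarrow> nat set) \<times> nat set \<Rightarrow> bool" where
  "dHHL_step V E ell st st' \<longleftrightarrow>
     (\<exists>v. v \<in> V - snd st \<and> uncovered V E ell (fst st) \<noteq> {} \<and>
        (\<forall>x \<in> V - snd st. center_weight V E ell (fst st) x \<le> center_weight V E ell (fst st) v) \<and>
        st' = ((\<lambda>u. if u \<in> \<Union>(center_edges V E ell (fst st) v) then insert v (fst st u) else fst st u),
               insert v (snd st)))"

inductive dHHL_reach :: "nat set \<Rightarrow> nat set set \<Rightarrow> (nat set \<Rightarrow> real) \<Rightarrow>
    (nat \<Rightarrow> nat set) \<times> nat set \<Rightarrow> bool"
  for V E ell where
  init: "dHHL_reach V E ell (\<lambda>_. {}, {})"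
| step: "dHHL_reach V E ell st \<Longrightarrow> dHHL_step V E ell st st' \<Longrightarrow> dHHL_reach V E ell st'"

text \<open>L is a possible output of d-HHL (for some resolution of ties).\<close>
definition dHHL_output :: "nat set \<Rightarrow> nat set set \<Rightarrow> (nat set \<Rightarrow> real) \<Rightarrow> (nat \<Rightarrow> nat set) \<Rightarrow> bool" where
  "dHHL_output V E ell L \<longleftrightarrow> (\<exists>S. dHHL_reach V E ell (L, S) \<and> uncovered V E ell L = {})"

definition witness :: "nat set \<Rightarrow> nat set set \<Rightarrow> (nat set \<Rightarrow> real) \<Rightarrow> real \<Rightarrow> nat list \<Rightarrow> nat list \<Rightarrow> bool" where
  "witness V E ell r P P' \<longleftrightarrow> is_shortest V E ell P' \<and> walk_len ell P' > r \<and>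
     (\<exists>pre suf. length pre \<le> 1 \<and> length suf \<le> 1 \<and> P' = pre @ P @ suf)"

definition significant :: "nat set \<Rightarrow> nat set set \<Rightarrow> (nat set \<Rightarrow> real) \<Rightarrow> real \<Rightarrow> nat list \<Rightarrow> bool" where
  "significant V E ell r P \<longleftrightarrow> is_shortest V E ell P \<and> (\<exists>P'. witness V E ell r P P')"

definition close_to :: "nat set \<Rightarrow> nat set set \<Rightarrow> (nat set \<Rightarrow> real) \<Rightarrow> real \<Rightarrow> real \<Rightarrow> nat \<Rightarrow> nat list \<Rightarrow> bool" where
  "close_to V E ell r d v P \<longleftrightarrow>
     (\<exists>P'. witness V E ell r P P' \<and> Min (dist V E ell v ` set P') \<le> d)"

definition S_set :: "nat set \<Rightarrow> nat set set \<Rightarrow> (nat set \<Rightarrow> real) \<Rightarrow> real \<Rightarrow> nat \<Rightarrow> nat list set" where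
  "S_set V E ell r v = {P. significant V E ell r P \<and> close_to V E ell r (2 * r) v P}"

definition hd_bound :: "nat set \<Rightarrow> nat set set \<Rightarrow> (nat set \<Rightarrow> real) \<Rightarrow> nat \<Rightarrow> bool" where
  "hd_bound V E ell h \<longleftrightarrow>
     (\<forall>r>0. \<forall>v\<in>V. \<exists>H. H \<subseteq> V \<and> card H \<le> h \<and>
        (\<forall>P\<in>S_set V E ell r v. set P \<inter> H \<noteq> {}))"

definition highway_dim :: "nat set \<Rightarrow> nat set set \<Rightarrow> (nat set \<Rightarrow> real) \<Rightarrow> nat" where
  "highway_dim V E ell = (LEAST h. hd_bound V E ell h)"

end

theory Submission
  imports Defs
begin

locale net =
  fixes V :: "nat set" and E :: "nat set set" and ell :: "nat set \<Rightarrow> real"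
  assumes wf: "wf_network V E ell" and conn: "connected_net V E"
    and two: "card V \<ge> 2" and len1: "\<forall>e\<in>E. ell e \<ge> 1"
begin

lemma finV: "finite V" using wf unfolding wf_network_def by auto

lemma walk_len_nonneg: assumes "walk V E P" shows "0 \<le> walk_len ell P"
  unfolding walk_len_def
proof (intro sum_nonneg)
  fix i assume "i \<in> {..<length P - 1}"
  hence "{P ! i, P ! Suc i} \<in> E" using assms unfolding walk_def by auto
  thus "0 \<le> ell {P ! i, P ! Suc i}" using len1 by force
qed

lemma walk_len_ge: "walk V E P \<Longrightarrow> real (length P - 1) \<le> walk_len ell P"
proof -
  assume w: "walk V E P"
  have "real (length P - 1) = (\<Sum>i<length P - 1. (1::real))" by simp
  also have "\<dots> \<le> walk_len ell P" unfolding walk_len_def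
    apply (rule sum_mono) using w len1 unfolding walk_def by auto
  finally show ?thesis .
qed

lemma walk_in_V: "walk V E P \<Longrightarrow> hd P \<in> V \<and> last P \<in> V"
  unfolding walk_def by auto

lemma dist_le: "walk V E P \<Longrightarrow> hd P = u \<Longrightarrow> last P = w \<Longrightarrow> dist V E ell u w \<le> walk_len ell P"
  unfolding dist_def
  apply (rule cInf_lower) apply blast
  unfolding bdd_below_def using walk_len_nonneg by blast

lemma sp_exists: assumes u: "u \<in> V" and w: "w \<in> V" shows "\<exists>P. shortest_path V E ell u w P"
proof -
  obtain P0 where P0: "walk V E P0" "hd P0 = u" "last P0 = w" using conn u w unfolding connected_net_def by blast
  define W where "W = {P. walk V E P \<and> hd P = u \<and> last P = w \<and> length P \<le> nat \<lceil>walk_len ell P0\<rceil> + 1}"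
  have "W \<subseteq> {xs. set xs \<subseteq> V \<and> length xs \<le> nat \<lceil>walk_len ell P0\<rceil> + 1}"
    unfolding W_def walk_def by auto
  hence finW: "finite W" using finite_lists_length_le[OF finV] finite_subset by blast
  have "real (length P0 - 1) \<le> walk_len ell P0" using walk_len_ge P0 by blast
  hence "length P0 \<le> nat \<lceil>walk_len ell P0\<rceil> + 1" by linarith
  hence P0W: "P0 \<in> W" unfolding W_def using P0 by blast
  define m where "m = Min (walk_len ell ` W)"
  have "m \<in> walk_len ell ` W" unfolding m_def using finW P0W by (intro Min_in) auto
  then obtain P1 where P1: "P1 \<in> W" "walk_len ell P1 = m" by blast
  have mle: "m \<le> walk_len ell Q" if "Q \<in> W" for Q unfolding m_def using finW that by simp
  have low: "m \<le> walk_len ell Q" if "walk V E Q" "hd Q = u" "last Q = w" for Q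
  proof (cases "length Q \<le> nat \<lceil>walk_len ell P0\<rceil> + 1")
    case True then show ?thesis using mle that unfolding W_def by blast
  next
    case False
    have "real (length Q - 1) \<le> walk_len ell Q" using walk_len_ge that by blast
    moreover have "m \<le> walk_len ell P0" using mle P0W by blast
    ultimately show ?thesis using False by linarith
  qed
  have "dist V E ell u w = m" unfolding dist_def
    apply (rule cInf_eq_minimum) using P1 unfolding W_def apply blast using low by blast
  thus ?thesis using P1 unfolding shortest_path_def W_def by auto
qed

lemma dist_nonneg: "u \<in> V \<Longrightarrow> w \<in> V \<Longrightarrow> 0 \<le> dist V E ell u w"
  using sp_exists walk_len_nonneg unfolding shortest_path_def by metis

lemma dist_self: "u \<in> V \<Longrightarrow> dist V E ell u u = 0"
proof -
  assume u: "u \<in> V"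
  have "walk V E [u]" using u unfolding walk_def by auto
  hence "dist V E ell u u \<le> walk_len ell [u]" using dist_le by auto
  moreover have "walk_len ell [u] = 0" unfolding walk_len_def by simp
  ultimately show ?thesis using dist_nonneg[OF u u] by linarith
qed

lemma sp_len2: "shortest_path V E ell u w P \<Longrightarrow> u \<noteq> w \<Longrightarrow> length P \<ge> 2"
proof (rule ccontr)
  assume "shortest_path V E ell u w P" "u \<noteq> w" "\<not> length P \<ge> 2"
  moreover then have "P \<noteq> []" unfolding shortest_path_def walk_def by auto
  ultimately obtain x where "P = [x]" by (cases P) (auto simp: Suc_le_eq)
  thus False using \<open>shortest_path V E ell u w P\<close> \<open>u \<noteq> w\<close> unfolding shortest_path_def by auto
qed

lemma dist_ge1: "u \<in> V \<Longrightarrow> w \<in> V \<Longrightarrow> u \<noteq> w \<Longrightarrow> dist V E ell u w \<ge> 1"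
proof -
  assume u: "u \<in> V" and w: "w \<in> V" and ne: "u \<noteq> w"
  obtain P where P: "shortest_path V E ell u w P" using sp_exists u w by blast
  have "length P \<ge> 2" using sp_len2 P ne by blast
  moreover have "real (length P - 1) \<le> walk_len ell P" using walk_len_ge P unfolding shortest_path_def by blast
  ultimately show ?thesis using P unfolding shortest_path_def by simp
qed

end
context net begin

lemma walk_rev: "walk V E P \<Longrightarrow> walk V E (rev P)"
  unfolding walk_def
proof (intro conjI allI impI)
  assume w: "P \<noteq> [] \<and> set P \<subseteq> V \<and> (\<forall>i. Suc i < length P \<longrightarrow> {P ! i, P ! Suc i} \<in> E)"
  show "rev P \<noteq> []" "set (rev P) \<subseteq> V" using w by auto
  fix i assume i: "Suc i < length (rev P)"
  define j where "j = length P - Suc (Suc i)"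
  have j: "Suc j < length P" "rev P ! i = P ! Suc j" "rev P ! Suc i = P ! j"
    using i unfolding j_def by (auto simp: rev_nth Suc_diff_Suc)
  show "{rev P ! i, rev P ! Suc i} \<in> E" using w j by (simp add: insert_commute)
qed

lemma walk_len_rev: "walk_len ell (rev P) = walk_len ell P"
proof -
  let ?g = "\<lambda>j. ell {P ! j, P ! Suc j}"
  have "walk_len ell (rev P) = (\<Sum>i<length P - 1. ?g (length P - 1 - Suc i))"
    unfolding walk_len_def length_rev
  proof (intro sum.cong refl)
    fix i assume "i \<in> {..<length P - 1}"
    hence i: "Suc i < length P" by auto
    have "rev P ! i = P ! Suc (length P - 1 - Suc i)" "rev P ! Suc i = P ! (length P - 1 - Suc i)"
      using i by (auto simp: rev_nth Suc_diff_Suc)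
    thus "ell {rev P ! i, rev P ! Suc i} = ?g (length P - 1 - Suc i)" by (simp add: insert_commute)
  qed
  also have "\<dots> = walk_len ell P" unfolding walk_len_def by (rule sum.nat_diff_reindex)
  finally show ?thesis .
qed

lemma dist_sym: "dist V E ell u w = dist V E ell w u"
proof -
  have "{walk_len ell P | P. walk V E P \<and> hd P = u \<and> last P = w} =
        {walk_len ell P | P. walk V E P \<and> hd P = w \<and> last P = u}" (is "?A = ?B")
  proof
    show "?A \<subseteq> ?B"
    proof
      fix x assume "x \<in> ?A"
      then obtain P where P: "x = walk_len ell P" "walk V E P" "hd P = u" "last P = w" by blast
      hence "P \<noteq> []" unfolding walk_def by auto
      hence "walk V E (rev P) \<and> hd (rev P) = w \<and> last (rev P) = u \<and> x = walk_len ell (rev P)"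
        using P walk_rev walk_len_rev by (simp add: hd_rev last_rev)
      thus "x \<in> ?B" by blast
    qed
  next
    show "?B \<subseteq> ?A"
    proof
      fix x assume "x \<in> ?B"
      then obtain P where P: "x = walk_len ell P" "walk V E P" "hd P = w" "last P = u" by blast
      hence "P \<noteq> []" unfolding walk_def by auto
      hence "walk V E (rev P) \<and> hd (rev P) = u \<and> last (rev P) = w \<and> x = walk_len ell (rev P)"
        using P walk_rev walk_len_rev by (simp add: hd_rev last_rev)
      thus "x \<in> ?A" by blast
    qed
  qed
  thus ?thesis unfolding dist_def by simp
qed

lemma sp_rev: "shortest_path V E ell u w P \<Longrightarrow> shortest_path V E ell w u (rev P)"
proof -
  assume P: "shortest_path V E ell u w P"
  hence "P \<noteq> []" unfolding shortest_path_def walk_def by auto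
  thus ?thesis using P walk_rev walk_len_rev dist_sym unfolding shortest_path_def
    by (simp add: hd_rev last_rev)
qed

lemma sp_walk: "shortest_path V E ell u w P \<Longrightarrow> walk V E P \<and> u \<in> V \<and> w \<in> V \<and> set P \<subseteq> V \<and> u \<in> set P"
  unfolding shortest_path_def walk_def by auto

lemma dist_prefix: assumes P: "shortest_path V E ell u w P" and x: "x \<in> set P"
  shows "dist V E ell u x \<le> dist V E ell u w"
proof -
  obtain k where k: "k < length P" "P ! k = x" using x by (metis in_set_conv_nth)
  define Q where "Q = take (Suc k) P"
  have wP: "walk V E P" using P unfolding shortest_path_def by blast
  have lQ: "length Q = Suc k" unfolding Q_def using k by simp
  have wQ: "walk V E Q" using wP k unfolding Q_def walk_def
    by (auto dest: in_set_takeD)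
  have hQ: "hd Q = u" using P unfolding Q_def shortest_path_def by (simp add: hd_take)
  have lastQ: "last Q = x" using k unfolding Q_def by (simp add: take_Suc_conv_app_nth)
  have "walk_len ell Q = (\<Sum>i<k. ell {P ! i, P ! Suc i})" unfolding walk_len_def lQ Q_def
    using k by (intro sum.cong refl) auto
  also have "\<dots> \<le> walk_len ell P" unfolding walk_len_def
  proof (rule sum_mono2)
    show "{..<k} \<subseteq> {..<length P - 1}" using k by auto
    fix i assume "i \<in> {..<length P - 1} - {..<k}"
    hence "{P ! i, P ! Suc i} \<in> E" using wP unfolding walk_def by auto
    thus "0 \<le> ell {P ! i, P ! Suc i}" using len1 by force
  qed simp
  finally have "dist V E ell u x \<le> walk_len ell P" using dist_le[OF wQ hQ lastQ] by linarith
  thus ?thesis using P unfolding shortest_path_def by simp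
qed

lemma dist_suffix: assumes P: "shortest_path V E ell u w P" and x: "x \<in> set P"
  shows "dist V E ell x w \<le> dist V E ell u w"
  using dist_prefix[OF sp_rev[OF P]] x dist_sym by (metis set_rev)

lemma sp_self: assumes P: "shortest_path V E ell u u P" shows "P = [u]"
proof -
  have uV: "u \<in> V" using sp_walk[OF P] by blast
  have "\<not> length P \<ge> 2"
  proof
    assume "length P \<ge> 2"
    hence "1 \<le> walk_len ell P" using walk_len_ge[of P] P unfolding shortest_path_def by force
    thus False using P dist_self[OF uV] unfolding shortest_path_def by simp
  qed
  moreover have "P \<noteq> []" using P unfolding shortest_path_def walk_def by auto
  ultimately obtain x where "P = [x]" by (cases P) (auto simp: Suc_le_eq)
  thus ?thesis using P unfolding shortest_path_def by simp
qed

lemma dist0_eq: "u \<in> V \<Longrightarrow> w \<in> V \<Longrightarrow> dist V E ell u w = 0 \<Longrightarrow> u = w"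
  using dist_ge1 by force

lemma covered_sym: "covered V E ell L a b \<Longrightarrow> covered V E ell L b a"
  unfolding covered_def using sp_rev by (metis IntD1 IntD2 IntI set_rev)

lemma covered_mono: "(\<And>x. L x \<subseteq> L' x) \<Longrightarrow> covered V E ell L a b \<Longrightarrow> covered V E ell L' a b"
  unfolding covered_def by blast

lemma unc_iff: "a \<in> V \<Longrightarrow> b \<in> V \<Longrightarrow> {a, b} \<in> uncovered V E ell L \<longleftrightarrow> \<not> covered V E ell L a b"
proof
  assume "{a, b} \<in> uncovered V E ell L"
  then obtain u w where "{a,b} = {u,w}" "\<not> covered V E ell L u w" unfolding uncovered_def by blast
  thus "\<not> covered V E ell L a b" using covered_sym by (metis doubleton_eq_iff)
qed (auto simp: uncovered_def)

lemma unc_elem: "p \<in> uncovered V E ell L \<Longrightarrow> \<exists>a b. p = {a,b} \<and> a \<in> V \<and> b \<in> V \<and> \<not> covered V E ell L a b"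
  unfolding uncovered_def by blast

definition PV where "PV = (\<lambda>(a,b). {a,b}) ` (V \<times> V)"

lemma finPV: "finite PV" unfolding PV_def using finV by simp
lemma cardPV: "card PV \<le> card V * card V"
  unfolding PV_def by (metis card_cartesian_product card_image_le finV finite_cartesian_product)

lemma unc_PV: "uncovered V E ell L \<subseteq> PV" unfolding uncovered_def PV_def by auto
lemma ce_PV: "center_edges V E ell L v \<subseteq> PV" unfolding center_edges_def PV_def by auto
lemma ce_unc: "center_edges V E ell L v \<subseteq> uncovered V E ell L"
  unfolding center_edges_def uncovered_def by blast

end
context net begin

definition upd :: "(nat \<Rightarrow> nat set) \<Rightarrow> nat \<Rightarrow> nat \<Rightarrow> nat set" where
  "upd L v = (\<lambda>u. if u \<in> \<Union>(center_edges V E ell L v) then insert v (L u) else L u)"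

lemma upd_mono: "L x \<subseteq> upd L v x" unfolding upd_def by auto

lemma unc_upd: "uncovered V E ell (upd L v) \<subseteq> uncovered V E ell L"
proof
  fix p assume "p \<in> uncovered V E ell (upd L v)"
  then obtain a b where "p = {a,b}" "a \<in> V" "b \<in> V" "\<not> covered V E ell (upd L v) a b"
    using unc_elem by blast
  thus "p \<in> uncovered V E ell L" using covered_mono[of L "upd L v"] upd_mono unc_iff by blast
qed

lemma ce_covered: "p \<in> center_edges V E ell L v \<Longrightarrow> p \<notin> uncovered V E ell (upd L v)"
proof -
  assume p: "p \<in> center_edges V E ell L v"
  then obtain a b P where ab: "p = {a,b}" "a \<in> V" "b \<in> V" "shortest_path V E ell a b P" "v \<in> set P"
    unfolding center_edges_def by blast
  have "a \<in> \<Union>(center_edges V E ell L v)" "b \<in> \<Union>(center_edges V E ell L v)" using p ab by auto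
  hence "v \<in> upd L v a \<inter> upd L v b" unfolding upd_def by auto
  hence "covered V E ell (upd L v) a b" using ab unfolding covered_def by blast
  thus ?thesis using unc_iff ab by blast
qed

lemma step_eq: "dHHL_step V E ell (L, S) st' \<Longrightarrow> \<exists>v. v \<in> V - S \<and> uncovered V E ell L \<noteq> {} \<and>
   (\<forall>x\<in>V - S. center_weight V E ell L x \<le> center_weight V E ell L v) \<and> st' = (upd L v, insert v S)"
  unfolding dHHL_step_def upd_def prod.sel by blast

lemma inv1: "dHHL_reach V E ell st \<Longrightarrow>
   \<forall>p\<in>uncovered V E ell (fst st). \<forall>a b P. p = {a,b} \<longrightarrow> shortest_path V E ell a b P \<longrightarrow> set P \<inter> snd st = {}"
proof (induction rule: dHHL_reach.induct)
  case init
  then show ?case by simp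
next
  case (step st st')
  obtain L S where st: "st = (L, S)" by fastforce
  obtain v where v: "v \<in> V - S" "st' = (upd L v, insert v S)" using step_eq step.hyps(2) st by blast
  show ?case
  proof (intro ballI allI impI)
    fix p a b P assume p: "p \<in> uncovered V E ell (fst st')" and pab: "p = {a,b}"
      and P: "shortest_path V E ell a b P"
    have pL: "p \<in> uncovered V E ell L" using p v unc_upd by auto
    hence "set P \<inter> S = {}" using step.IH st pab P by auto
    moreover have "v \<notin> set P"
    proof
      assume vP: "v \<in> set P"
      have "a \<in> V" "b \<in> V" using sp_walk[OF P] sp_walk[OF sp_rev[OF P]] by auto
      hence "\<not> covered V E ell L a b" using pL pab unc_iff by blast
      hence "p \<in> center_edges V E ell L v" unfolding center_edges_def using pab P vP \<open>a\<in>V\<close> \<open>b\<in>V\<close> by blast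
      thus False using ce_covered p v by auto
    qed
    ultimately show "set P \<inter> snd st' = {}" using v by auto
  qed
qed

end
context net begin
definition distp :: "nat set \<Rightarrow> real" where "distp p = dist V E ell (Min p) (Max p)"
definition sc :: "nat set \<Rightarrow> nat" where "sc p = nat \<lfloor>log 2 (distp p)\<rfloor>"

lemma distp_pair: "distp {a,b} = dist V E ell a b"
proof (cases "a \<le> b")
  case True
  then show ?thesis unfolding distp_def by (simp add: max_def min_def)
next
  case False
  then have "Min {a,b} = b" "Max {a,b} = a" by (simp_all add: max_def min_def)
  then show ?thesis unfolding distp_def by (metis dist_sym)
qed

lemma pw_eq: "pair_weight V E ell (Min p) (Max p) = (if distp p = 0 then 0 else real (card V) ^ (2 * sc p))"
  unfolding pair_weight_def distp_def sc_def by simp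

lemma pw_nonneg: "0 \<le> pair_weight V E ell (Min p) (Max p)" unfolding pw_eq by simp

lemma scale: assumes "d \<ge> (1::real)" shows "2 ^ nat \<lfloor>log 2 d\<rfloor> \<le> d" "d < 2 ^ (nat \<lfloor>log 2 d\<rfloor> + 1)"
proof -
  define k where "k = nat \<lfloor>log 2 d\<rfloor>"
  have l0: "0 \<le> log 2 d" using assms by simp
  hence kk: "real k = of_int \<lfloor>log 2 d\<rfloor>" unfolding k_def by simp
  have e1: "(2::real) ^ k = 2 powr (real k)" by (simp add: powr_realpow)
  have e2: "(2::real) ^ (k+1) = 2 powr (real k + 1)"
    using powr_realpow[of 2 "k+1"] by (simp add: add.commute)
  have d: "2 powr (log 2 d) = d" using assms by simp
  have "(2::real) powr (real k) \<le> 2 powr (log 2 d)"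
    unfolding kk by (intro powr_mono) auto
  thus "2 ^ nat \<lfloor>log 2 d\<rfloor> \<le> d" using e1 d unfolding k_def by simp
  have "2 powr (log 2 d) < (2::real) powr (real k + 1)"
    unfolding kk by (intro powr_less_mono) auto
  thus "d < 2 ^ (nat \<lfloor>log 2 d\<rfloor> + 1)" using e2 d unfolding k_def by simp
qed

lemma sc_mono: "1 \<le> d \<Longrightarrow> d \<le> D \<Longrightarrow> nat \<lfloor>log 2 d\<rfloor> \<le> nat \<lfloor>log 2 D\<rfloor>"
  by (intro nat_mono floor_mono) auto

lemma distp_pos: "p = {a,b} \<Longrightarrow> a \<in> V \<Longrightarrow> b \<in> V \<Longrightarrow> distp p \<noteq> 0 \<Longrightarrow> a \<noteq> b \<and> 1 \<le> distp p"
proof -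
  assume h: "p = {a,b}" "a \<in> V" "b \<in> V" "distp p \<noteq> 0"
  have "a \<noteq> b" using h distp_pair dist_self by metis
  thus ?thesis using h distp_pair dist_ge1 by metis
qed

end
context net begin

definition AA :: "(nat \<Rightarrow> nat set) \<Rightarrow> nat \<Rightarrow> nat \<Rightarrow> nat set set" where
  "AA L M x = {p \<in> center_edges V E ell L x. distp p \<noteq> 0 \<and> sc p = M}"

lemma finCE: "finite (center_edges V E ell L x)" by (rule finite_subset[OF ce_PV finPV])
lemma finAA: "finite (AA L M x)" using finCE unfolding AA_def by simp
lemma AA_sub: "AA L M x \<subseteq> center_edges V E ell L x" unfolding AA_def by blast

lemma nV: "card V \<ge> 2" using two .

lemma cw_bounds:
  assumes bound: "\<forall>p\<in>uncovered V E ell L. distp p \<noteq> 0 \<longrightarrow> sc p \<le> M"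
  shows "real (card V) ^ (2*M) * card (AA L M y) \<le> center_weight V E ell L y"
    and "center_weight V E ell L y < real (card V) ^ (2*M) * (card (AA L M y) + 1)"
proof -
  define C where "C = center_edges V E ell L y"
  define A where "A = AA L M y"
  define B where "B = {p \<in> C - A. distp p \<noteq> 0}"
  define N where "N = real (card V) ^ (2*M)"
  define f where "f = (\<lambda>p. pair_weight V E ell (Min p) (Max p))"
  have finC: "finite C" unfolding C_def using finCE .
  have AC: "A \<subseteq> C" unfolding A_def C_def using AA_sub .
  have Npos: "0 < N" unfolding N_def using nV by simp
  have cw: "center_weight V E ell L y = sum f A + sum f (C - A)"
    unfolding center_weight_def C_def[symmetric] f_def
    using sum.subset_diff[OF AC finC] by (simp add: add.commute)
  have sA: "sum f A = card A * N"
  proof -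
    have "sum f A = sum (\<lambda>_. N) A"
      by (intro sum.cong refl) (auto simp: f_def pw_eq A_def AA_def N_def)
    thus ?thesis by simp
  qed
  have sCA: "sum f (C - A) = sum f B"
    by (rule sum.mono_neutral_right) (use finC in \<open>auto simp: B_def f_def pw_eq\<close>)
  have sB0: "0 \<le> sum f B" unfolding f_def by (intro sum_nonneg pw_nonneg)
  have sBN: "sum f B < N"
  proof (cases "B = {}")
    case True then show ?thesis using Npos by simp
  next
    case False
    then obtain p0 where p0: "p0 \<in> B" by blast
    have Bunc: "B \<subseteq> uncovered V E ell L" unfolding B_def C_def using ce_unc by blast
    have scl: "sc p < M" if "p \<in> B" for p
    proof -
      have "sc p \<le> M" using bound Bunc that unfolding B_def by blast
      moreover have "sc p \<noteq> M" using that unfolding B_def A_def AA_def C_def by blast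
      ultimately show ?thesis by simp
    qed
    hence M1: "M \<ge> 1" using p0 by fastforce
    have fle: "f p \<le> real (card V) ^ (2*(M-1))" if "p \<in> B" for p
    proof -
      have "f p = real (card V) ^ (2 * sc p)" using that unfolding f_def B_def pw_eq by simp
      also have "\<dots> \<le> real (card V) ^ (2*(M-1))"
        by (rule power_increasing) (use scl[OF that] nV in auto)
      finally show ?thesis .
    qed
    obtain a0 where a0: "a0 \<in> V" using nV by fastforce
    have "B \<subseteq> (\<lambda>(a,b). {a,b}) ` (V \<times> V - {(a0,a0)})"
    proof
      fix p assume p: "p \<in> B"
      then obtain a b where ab: "p = {a,b}" "a \<in> V" "b \<in> V"
        unfolding B_def C_def center_edges_def by blast
      have "a \<noteq> b" using distp_pos[OF ab] p unfolding B_def by blast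
      thus "p \<in> (\<lambda>(a,b). {a,b}) ` (V \<times> V - {(a0,a0)})" using ab by force
    qed
    hence "card B \<le> card (V \<times> V - {(a0,a0)})"
      using finV by (meson card_image_le finite_Diff finite_SigmaI le_trans card_mono finite_imageI)
    also have "\<dots> = card V * card V - 1" using a0 finV by (simp add: card_cartesian_product)
    finally have cB0: "card B \<le> card V * card V - 1" .
    have one: "1 \<le> card V * card V" using nV by (simp add: Suc_le_eq)
    have cB: "real (card B) \<le> real (card V) * real (card V) - 1"
      using cB0 one by (metis of_nat_1 of_nat_diff of_nat_le_iff of_nat_mult)
    have finB: "finite B" unfolding B_def using finC by simp
    have "sum f B \<le> real (card B) * real (card V) ^ (2*(M-1))"
      using sum_bounded_above[of B f "real (card V) ^ (2*(M-1))"] fle by simp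
    also have "\<dots> \<le> (real (card V) * real (card V) - 1) * real (card V) ^ (2*(M-1))"
      by (rule mult_right_mono[OF cB]) simp
    also have "\<dots> < real (card V) * real (card V) * real (card V) ^ (2*(M-1))"
      using nV by simp
    also have "\<dots> = N" unfolding N_def using M1
      by (metis (no_types, lifting) One_nat_def Suc_pred mult_Suc_right not_one_le_zero power2_eq_square power_add power_mult zero_less_iff_neq_zero le_zero_eq)
    finally show ?thesis .
  qed
  show "real (card V) ^ (2*M) * card (AA L M y) \<le> center_weight V E ell L y"
    using cw sA sCA sB0 unfolding A_def N_def by (simp add: mult.commute)
  show "center_weight V E ell L y < real (card V) ^ (2*M) * (card (AA L M y) + 1)"
    using cw sA sCA sBN unfolding A_def N_def by (simp add: algebra_simps)
qed

lemma greedy_AA: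
  assumes bound: "\<forall>p\<in>uncovered V E ell L. distp p \<noteq> 0 \<longrightarrow> sc p \<le> M"
    and vmax: "center_weight V E ell L x \<le> center_weight V E ell L v"
  shows "card (AA L M x) \<le> card (AA L M v)"
proof -
  define N where "N = real (card V) ^ (2*M)"
  have Npos: "0 < N" unfolding N_def using nV by simp
  have "N * card (AA L M x) < N * (card (AA L M v) + 1)"
    using cw_bounds[OF bound, of x] cw_bounds[OF bound, of v] vmax unfolding N_def by linarith
  hence "real (card (AA L M x)) < card (AA L M v) + 1" using Npos by (simp only: mult_less_cancel_left_pos)
  thus ?thesis by linarith
qed

end
context net begin

definition rr :: "nat \<Rightarrow> nat \<Rightarrow> real" where
  "rr u i = max (2^i/2) (Max {dist V E ell u x | x. x \<in> V \<and> dist V E ell u x < 2^(i+1)} / 2)"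

lemma rr_props: assumes u: "u \<in> V"
  shows "0 < rr u i" "rr u i < 2^i" "\<And>x. x \<in> V \<Longrightarrow> dist V E ell u x < 2^(i+1) \<Longrightarrow> dist V E ell u x \<le> 2 * rr u i"
proof -
  define D0 where "D0 = {dist V E ell u x | x. x \<in> V \<and> dist V E ell u x < 2^(i+1)}"
  have fin: "finite D0" unfolding D0_def using finV by simp
  have ne: "dist V E ell u u \<in> D0" unfolding D0_def using u dist_self[OF u] by (auto intro!: exI[of _ u])
  have "Max D0 \<in> D0" using fin ne by (intro Max_in) auto
  hence lt: "Max D0 < 2^(i+1)" unfolding D0_def by auto
  show "0 < rr u i" unfolding rr_def by (simp add: less_max_iff_disj)
  show "rr u i < 2^i" unfolding rr_def D0_def[symmetric] using lt by simp
  fix x assume "x \<in> V" "dist V E ell u x < 2^(i+1)"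
  hence "dist V E ell u x \<in> D0" unfolding D0_def by blast
  hence "dist V E ell u x \<le> Max D0" using fin by simp
  thus "dist V E ell u x \<le> 2 * rr u i" unfolding rr_def D0_def[symmetric] by linarith
qed

lemma in_S: assumes u: "u \<in> V" and P: "shortest_path V E ell a b P"
  and big: "2^i \<le> dist V E ell a b" and x: "x \<in> set P" and near: "dist V E ell u x < 2^(i+1)"
  shows "P \<in> S_set V E ell (rr u i) u"
proof -
  have sh: "is_shortest V E ell P" using P unfolding is_shortest_def shortest_path_def by auto
  have "walk_len ell P > rr u i" using P big rr_props(2)[OF u, of i] unfolding shortest_path_def by linarith
  moreover have "\<exists>pre suf. length pre \<le> 1 \<and> length suf \<le> 1 \<and> P = pre @ P @ suf"
    by (rule exI[of _ "[]"], rule exI[of _ "[]"]) simp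
  ultimately have wit: "witness V E ell (rr u i) P P" unfolding witness_def using sh by blast
  have xV: "x \<in> V" using sp_walk[OF P] x by blast
  have "Min (dist V E ell u ` set P) \<le> dist V E ell u x" using x by simp
  also have "\<dots> \<le> 2 * rr u i" using rr_props(3)[OF u xV near] .
  finally have "close_to V E ell (rr u i) (2 * rr u i) u P" unfolding close_to_def using wit by blast
  thus ?thesis unfolding S_set_def significant_def using sh wit by blast
qed

end
context net begin
lemma hd_card: "hd_bound V E ell (card V)"
  unfolding hd_bound_def
proof (intro allI impI ballI)
  fix r v assume "v \<in> V"
  have "\<forall>P\<in>S_set V E ell r v. set P \<inter> V \<noteq> {}"
  proof
    fix P assume "P \<in> S_set V E ell r v"
    hence "walk V E P" unfolding S_set_def significant_def is_shortest_def shortest_path_def by blast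
    thus "set P \<inter> V \<noteq> {}" unfolding walk_def by (metis Int_absorb2 set_empty)
  qed
  thus "\<exists>H\<subseteq>V. card H \<le> card V \<and> (\<forall>P\<in>S_set V E ell r v. set P \<inter> H \<noteq> {})" by blast
qed

lemma hd_h: "hd_bound V E ell (highway_dim V E ell)"
  unfolding highway_dim_def using hd_card by (rule LeastI)

lemma h_pos: "highway_dim V E ell \<ge> 1"
proof (rule ccontr)
  assume h0: "\<not> highway_dim V E ell \<ge> 1"
  have "\<not> card V \<le> Suc 0" using nV by linarith
  hence "\<not> (\<forall>a\<in>V. \<forall>b\<in>V. a = b)" using card_le_Suc0_iff_eq[OF finV] by blast
  then obtain a b where ab: "a \<in> V" "b \<in> V" "a \<noteq> b" by blast
  obtain P where P: "shortest_path V E ell a b P" using sp_exists ab by blast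
  define i where "i = nat \<lfloor>log 2 (dist V E ell a b)\<rfloor>"
  have d1: "1 \<le> dist V E ell a b" using dist_ge1 ab by blast
  have "2^i \<le> dist V E ell a b" unfolding i_def using scale(1)[OF d1] .
  moreover have "a \<in> set P" using sp_walk[OF P] by blast
  moreover have "dist V E ell a a < 2^(i+1)" using dist_self[OF ab(1)] by simp
  ultimately have PS: "P \<in> S_set V E ell (rr a i) a" by (rule in_S[OF ab(1) P])
  obtain H where H: "H \<subseteq> V" "card H \<le> highway_dim V E ell" "\<forall>P\<in>S_set V E ell (rr a i) a. set P \<inter> H \<noteq> {}"
    using hd_h[unfolded hd_bound_def, rule_format, OF rr_props(1)[OF ab(1)] ab(1)] by blast
  have "card H = 0" using H(2) h0 by simp
  moreover have "finite H" using finite_subset[OF H(1) finV] .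
  ultimately have "H = {}" by simp
  thus False using H(3) PS by blast
qed

end
context net begin

definition TT :: "nat \<Rightarrow> (nat \<Rightarrow> nat set) \<Rightarrow> nat \<Rightarrow> nat set set" where
  "TT u L i = {p \<in> uncovered V E ell L. distp p \<noteq> 0 \<and> sc p = i \<and>
     (\<exists>a b P x. p = {a,b} \<and> shortest_path V E ell a b P \<and> x \<in> set P \<and> dist V E ell u x < 2^(i+1))}"

lemma TT_unc: "TT u L i \<subseteq> uncovered V E ell L"
proof
  fix p assume "p \<in> TT u L i"
  thus "p \<in> uncovered V E ell L" unfolding TT_def by simp
qed
lemma TT_PV: "TT u L i \<subseteq> PV" using TT_unc unc_PV by (rule subset_trans)
lemma finTT: "finite (TT u L i)" by (rule finite_subset[OF TT_PV finPV])
lemma cardTT: "card (TT u L i) \<le> card V * card V"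
  using card_mono[OF finPV TT_PV, of u L i] cardPV by linarith

lemma TT_mono: "uncovered V E ell L' \<subseteq> uncovered V E ell L \<Longrightarrow> TT u L' i \<subseteq> TT u L i"
  unfolding TT_def by blast

lemma dist_le_diam: "a \<in> V \<Longrightarrow> b \<in> V \<Longrightarrow> dist V E ell a b \<le> diameter V E ell"
proof -
  assume ab: "a \<in> V" "b \<in> V"
  have sub: "{dist V E ell u w | u w. u \<in> V \<and> w \<in> V} \<subseteq> (\<lambda>(u,w). dist V E ell u w) ` (V \<times> V)"
  proof
    fix x assume "x \<in> {dist V E ell u w | u w. u \<in> V \<and> w \<in> V}"
    then obtain u w where "x = dist V E ell u w" "u \<in> V" "w \<in> V" by blast
    thus "x \<in> (\<lambda>(u,w). dist V E ell u w) ` (V \<times> V)" by (intro image_eqI[of _ _ "(u,w)"]) auto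
  qed
  have fin: "finite {dist V E ell u w | u w. u \<in> V \<and> w \<in> V}"
    by (rule finite_subset[OF sub]) (simp add: finV)
  have mem: "dist V E ell a b \<in> {dist V E ell u w | u w. u \<in> V \<and> w \<in> V}" using ab by blast
  show ?thesis unfolding diameter_def by (rule Max_ge[OF fin mem])
qed

lemma sp_of_ce: "p \<in> center_edges V E ell L v \<Longrightarrow>
   \<exists>a b P. p = {a,b} \<and> a \<in> V \<and> b \<in> V \<and> \<not> covered V E ell L a b \<and> shortest_path V E ell a b P \<and> v \<in> set P"
  unfolding center_edges_def by blast

lemma ce_intro: "a \<in> V \<Longrightarrow> b \<in> V \<Longrightarrow> \<not> covered V E ell L a b \<Longrightarrow> shortest_path V E ell a b P
   \<Longrightarrow> x \<in> set P \<Longrightarrow> {a,b} \<in> center_edges V E ell L x"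
  unfolding center_edges_def by blast

lemma phase_step:
  assumes reach: "dHHL_reach V E ell (L, S)" and u: "u \<in> V"
    and v: "v \<in> V - S" and vmax: "\<forall>x\<in>V - S. center_weight V E ell L x \<le> center_weight V E ell L v"
    and hub: "u \<in> \<Union>(center_edges V E ell L v)"
    and pos: "\<exists>p\<in>uncovered V E ell L. distp p \<noteq> 0"
  defines "M \<equiv> Max (sc ` {p\<in>uncovered V E ell L. distp p \<noteq> 0})"
  shows "M \<le> nat \<lfloor>log 2 (max 2 (diameter V E ell))\<rfloor>"
    and "1 \<le> card (TT u L M)"
    and "real (card (TT u (upd L v) M)) \<le> card (TT u L M) - card (TT u L M) / real (highway_dim V E ell)"
proof -
  let ?U = "{p\<in>uncovered V E ell L. distp p \<noteq> 0}"
  have finU: "finite ?U" by (rule finite_subset[OF _ finPV]) (use unc_PV in blast)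
  have I1: "\<forall>p\<in>uncovered V E ell L. \<forall>a b P. p = {a,b} \<longrightarrow> shortest_path V E ell a b P \<longrightarrow> set P \<inter> S = {}"
    using inv1[OF reach] by simp
  have bound: "\<forall>p\<in>uncovered V E ell L. distp p \<noteq> 0 \<longrightarrow> sc p \<le> M"
  proof (intro ballI impI)
    fix p assume "p \<in> uncovered V E ell L" "distp p \<noteq> 0"
    hence "sc p \<in> sc ` ?U" by blast
    thus "sc p \<le> M" unfolding M_def using finU by simp
  qed
  have "M \<in> sc ` ?U" unfolding M_def using finU pos by (intro Max_in) auto
  then obtain p0 where p0: "p0 \<in> uncovered V E ell L" "distp p0 \<noteq> 0" "sc p0 = M" by blast
  obtain a0 b0 where ab0: "p0 = {a0,b0}" "a0 \<in> V" "b0 \<in> V" "\<not> covered V E ell L a0 b0"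
    using unc_elem[OF p0(1)] by blast
  have d1: "1 \<le> distp p0" using distp_pos[OF ab0(1-3) p0(2)] by blast
  have "distp p0 \<le> max 2 (diameter V E ell)" using dist_le_diam[OF ab0(2,3)] distp_pair ab0(1) by simp
  thus "M \<le> nat \<lfloor>log 2 (max 2 (diameter V E ell))\<rfloor>" using sc_mono[OF d1] p0(3) unfolding sc_def by simp
  have greedy: "card (AA L M x) \<le> card (AA L M v)" if "x \<in> V - S" for x
    using greedy_AA[OF bound] vmax that by blast
  obtain P0 where P0: "shortest_path V E ell a0 b0 P0" using sp_exists ab0 by blast
  have a0P: "a0 \<in> set P0" using sp_walk[OF P0] by blast
  have a0S: "a0 \<notin> S" using I1 p0(1) ab0(1) P0 a0P by blast
  have "p0 \<in> center_edges V E ell L a0" unfolding ab0(1) by (rule ce_intro[OF ab0(2,3,4) P0 a0P])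
  hence "p0 \<in> AA L M a0" unfolding AA_def using p0 by blast
  hence "AA L M a0 \<noteq> {}" by blast
  hence "card (AA L M a0) \<noteq> 0" using finAA by simp
  hence "1 \<le> card (AA L M a0)" by simp
  hence Av1: "1 \<le> card (AA L M v)" using greedy[of a0] a0S ab0(2) by simp
  obtain p where p: "p \<in> center_edges V E ell L v" "u \<in> p" using hub by blast
  obtain a b P where ab: "p = {a,b}" "a \<in> V" "b \<in> V" "\<not> covered V E ell L a b"
      "shortest_path V E ell a b P" "v \<in> set P" using sp_of_ce[OF p(1)] by blast
  have "dist V E ell u v \<le> dist V E ell a b"
  proof (cases "u = a")
    case True then show ?thesis using dist_prefix[OF ab(5,6)] by simp
  next
    case False
    hence "u = b" using p ab by auto
    then show ?thesis using dist_suffix[OF ab(5,6)] dist_sym by metis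
  qed
  moreover have "dist V E ell a b < 2^(M+1)"
  proof (cases "distp p = 0")
    case True then show ?thesis using distp_pair ab(1) by simp
  next
    case False
    have pU: "p \<in> uncovered V E ell L" using p(1) ce_unc by blast
    have "sc p \<le> M" using bound pU False by blast
    moreover have "distp p < 2 ^ (sc p + 1)" unfolding sc_def
      using scale(2) distp_pos[OF ab(1-3) False] by blast
    moreover have "(2::real)^(sc p + 1) \<le> 2^(M+1)" by (rule power_increasing) (use \<open>sc p \<le> M\<close> in auto)
    ultimately have "distp p < 2^(M+1)" by linarith
    thus ?thesis using distp_pair ab(1) by simp
  qed
  ultimately have near: "dist V E ell u v < 2^(M+1)" by linarith
  have AvT: "AA L M v \<subseteq> TT u L M"
  proof
    fix q assume q: "q \<in> AA L M v"
    hence "q \<in> center_edges V E ell L v" using AA_sub by blast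
    then obtain c d Q where cd: "q = {c,d}" "c \<in> V" "d \<in> V" "\<not> covered V E ell L c d"
      "shortest_path V E ell c d Q" "v \<in> set Q" using sp_of_ce by blast
    have qU: "q \<in> uncovered V E ell L" using cd unc_iff by blast
    have qd: "distp q \<noteq> 0 \<and> sc q = M" using q unfolding AA_def by blast
    show "q \<in> TT u L M" unfolding TT_def using qU qd cd(1,5,6) near by blast
  qed
  thus "1 \<le> card (TT u L M)" using Av1 card_mono[OF finTT AvT] by linarith
  obtain H where H: "H \<subseteq> V" "card H \<le> highway_dim V E ell"
      "\<forall>P\<in>S_set V E ell (rr u M) u. set P \<inter> H \<noteq> {}"
    using hd_h[unfolded hd_bound_def, rule_format, OF rr_props(1)[OF u] u] by blast
  have finH: "finite H" by (rule finite_subset[OF H(1) finV])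
  have Tcov: "TT u L M \<subseteq> (\<Union>y\<in>H - S. AA L M y)"
  proof
    fix q assume q: "q \<in> TT u L M"
    then obtain c d Q x where cd: "q = {c,d}" "shortest_path V E ell c d Q" "x \<in> set Q"
      "dist V E ell u x < 2^(M+1)" and qU: "q \<in> uncovered V E ell L" and qd: "distp q \<noteq> 0" "sc q = M"
      unfolding TT_def by blast
    have cV: "c \<in> V" "d \<in> V" using sp_walk[OF cd(2)] sp_walk[OF sp_rev[OF cd(2)]] by auto
    have "1 \<le> distp q" using distp_pos[OF cd(1) cV qd(1)] by blast
    hence "2^M \<le> distp q" using scale(1) qd(2) unfolding sc_def by blast
    hence "2^M \<le> dist V E ell c d" using distp_pair cd(1) by simp
    hence QS: "Q \<in> S_set V E ell (rr u M) u" using in_S[OF u cd(2) _ cd(3,4)] by blast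
    then obtain y where y: "y \<in> set Q" "y \<in> H" using H(3) by blast
    have yS: "y \<notin> S" using I1 qU cd(1,2) y(1) by blast
    have "\<not> covered V E ell L c d" using qU cd(1) cV unc_iff by blast
    hence "q \<in> center_edges V E ell L y" unfolding cd(1) using ce_intro[OF cV] cd(2) y(1) by blast
    hence "q \<in> AA L M y" unfolding AA_def using qd by blast
    thus "q \<in> (\<Union>y\<in>H - S. AA L M y)" using y yS by blast
  qed
  have "card (TT u L M) \<le> card (\<Union>y\<in>H - S. AA L M y)"
    by (rule card_mono[OF _ Tcov]) (use finH finAA in simp)
  also have "\<dots> \<le> (\<Sum>y\<in>H - S. card (AA L M y))" using card_UN_le finH by blast
  also have "\<dots> \<le> (\<Sum>y\<in>H - S. card (AA L M v))"
    by (rule sum_mono) (use greedy H(1) in blast)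
  also have "\<dots> = card (H - S) * card (AA L M v)" by simp
  also have "\<dots> \<le> highway_dim V E ell * card (AA L M v)"
    by (rule mult_right_mono) (use H(2) card_mono[OF finH, of "H - S"] in auto)
  finally have Th: "card (TT u L M) \<le> highway_dim V E ell * card (AA L M v)" .
  have T'sub: "TT u (upd L v) M \<subseteq> TT u L M - AA L M v"
  proof
    fix q assume q: "q \<in> TT u (upd L v) M"
    hence "q \<in> TT u L M" using TT_mono[OF unc_upd] by blast
    moreover have "q \<notin> AA L M v"
    proof
      assume "q \<in> AA L M v"
      hence "q \<notin> uncovered V E ell (upd L v)" using ce_covered AA_sub by blast
      thus False using q unfolding TT_def by blast
    qed
    ultimately show "q \<in> TT u L M - AA L M v" by blast
  qed
  have "card (TT u (upd L v) M) \<le> card (TT u L M - AA L M v)"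
    by (rule card_mono[OF _ T'sub]) (use finTT in simp)
  also have "\<dots> = card (TT u L M) - card (AA L M v)" using card_Diff_subset[OF finAA AvT] .
  finally have T'le: "card (TT u (upd L v) M) + card (AA L M v) \<le> card (TT u L M)"
    using card_mono[OF finTT AvT] by linarith
  have hpos: "real (highway_dim V E ell) \<ge> 1" using h_pos by simp
  have "real (card (TT u L M)) / real (highway_dim V E ell) \<le> card (AA L M v)"
    using Th hpos by (simp add: divide_le_eq mult.commute of_nat_mult[symmetric] del: of_nat_mult)
  thus "real (card (TT u (upd L v) M)) \<le> card (TT u L M) - card (TT u L M) / real (highway_dim V E ell)"
    using T'le by linarith
qed

end
definition phi :: "real \<Rightarrow> nat \<Rightarrow> real" where
  "phi h t = (if t = 0 then 0 else h * ln (real t) + 1)"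

lemma phi_nonneg: "0 \<le> h \<Longrightarrow> 0 \<le> phi h t"
  unfolding phi_def by simp

lemma phi_mono: assumes h: "0 \<le> h" and tt: "t' \<le> t" shows "phi h t' \<le> phi h t"
proof (cases "t' = 0")
  case True then show ?thesis using phi_nonneg[OF h] unfolding phi_def by simp
next
  case False
  hence "ln (real t') \<le> ln (real t)" using tt by simp
  hence "h * ln (real t') \<le> h * ln (real t)" using h by (rule mult_left_mono)
  then show ?thesis unfolding phi_def using False tt by simp
qed

lemma phi_dec: assumes h: "1 \<le> h" and t: "1 \<le> t" and tt: "real t' \<le> t - t / h"
  shows "phi h t' \<le> phi h t - 1"
proof (cases "t' = 0")
  case True then show ?thesis unfolding phi_def using t h by simp
next
  case False
  have t'1: "1 \<le> real t'" using False by simp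
  have eq: "real t - real t / h = real t * (1 - 1/h)" by (simp add: algebra_simps)
  have tpos: "0 < real t" using t by simp
  have "real t * (1/h) < real t * 1" using tt t'1 by simp
  hence "1/h < 1" using tpos by (simp only: mult_less_cancel_left_pos)
  hence q: "0 < 1 - 1/h" by simp
  have "ln (real t') \<le> ln (real t * (1 - 1/h))" using tt eq t'1 by simp
  also have "\<dots> = ln (real t) + ln (1 - 1/h)" using tpos q by (simp add: ln_mult_pos)
  also have "\<dots> \<le> ln (real t) + ((1 - 1/h) - 1)" using ln_le_minus_one[OF q] by simp
  finally have "ln (real t') \<le> ln (real t) - 1/h" by simp
  hence "h * ln (real t') \<le> h * (ln (real t) - 1/h)" using h by (intro mult_left_mono) auto
  also have "\<dots> = h * ln (real t) - 1" using h by (simp add: algebra_simps)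
  finally show ?thesis unfolding phi_def using False t by simp
qed

lemma card_ins_le: "card (insert x A) \<le> card A + 1"
  by (cases "finite A") (auto simp: card_insert_if)

context net begin

definition KK where "KK = nat \<lfloor>log 2 (max 2 (diameter V E ell))\<rfloor>"
definition hh where "hh = real (highway_dim V E ell)"

definition Pot :: "nat \<Rightarrow> (nat \<Rightarrow> nat set) \<Rightarrow> real" where
  "Pot u L = real (card (L u)) + (\<Sum>i\<le>KK. phi hh (card (TT u L i)))
      + (if {u} \<in> uncovered V E ell L then 1 else 0)"

lemma hh1: "1 \<le> hh" unfolding hh_def using h_pos by simp

lemma pot_step: assumes reach: "dHHL_reach V E ell (L, S)" and st: "dHHL_step V E ell (L, S) st'"
  and u: "u \<in> V"
  shows "Pot u (fst st') \<le> Pot u L"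
proof -
  obtain v where v: "v \<in> V - S" "uncovered V E ell L \<noteq> {}"
    "\<forall>x\<in>V - S. center_weight V E ell L x \<le> center_weight V E ell L v" "st' = (upd L v, insert v S)"
    using step_eq[OF st] by blast
  let ?L' = "upd L v"
  have h0: "0 \<le> hh" using hh1 by simp
  have Tle: "phi hh (card (TT u ?L' i)) \<le> phi hh (card (TT u L i))" for i
    using phi_mono[OF h0 card_mono[OF finTT TT_mono[OF unc_upd]]] .
  have sumle: "(\<Sum>i\<le>KK. phi hh (card (TT u ?L' i))) \<le> (\<Sum>i\<le>KK. phi hh (card (TT u L i)))"
    by (rule sum_mono) (rule Tle)
  have indle: "(if {u} \<in> uncovered V E ell ?L' then 1 else 0) \<le> (if {u} \<in> uncovered V E ell L then 1 else (0::real))"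
    using unc_upd by auto
  show ?thesis
  proof (cases "u \<in> \<Union>(center_edges V E ell L v)")
    case False
    hence "?L' u = L u" unfolding upd_def by simp
    then show ?thesis unfolding Pot_def v(4) using sumle indle by simp
  next
    case hub: True
    have "?L' u = insert v (L u)" using hub unfolding upd_def by simp
    hence "card (?L' u) \<le> card (L u) + 1" using card_ins_le by simp
    hence cL: "real (card (?L' u)) \<le> real (card (L u)) + 1" by linarith
    show ?thesis
    proof (cases "\<exists>p\<in>uncovered V E ell L. distp p \<noteq> 0")
      case pos: True
      define M where "M = Max (sc ` {p\<in>uncovered V E ell L. distp p \<noteq> 0})"
      have MK: "M \<le> KK" and T1: "1 \<le> card (TT u L M)"
        and Tdec: "real (card (TT u ?L' M)) \<le> card (TT u L M) - card (TT u L M) / hh"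
        using phase_step[OF reach u v(1) v(3) hub pos] unfolding M_def KK_def hh_def by auto
      have Mdec: "phi hh (card (TT u ?L' M)) \<le> phi hh (card (TT u L M)) - 1"
        by (rule phi_dec[OF hh1 _ Tdec]) (use T1 in simp)
      have MI: "M \<in> {..KK}" using MK by simp
      have "(\<Sum>i\<le>KK. phi hh (card (TT u ?L' i))) = phi hh (card (TT u ?L' M)) + (\<Sum>i\<in>{..KK}-{M}. phi hh (card (TT u ?L' i)))"
        using sum.remove[OF _ MI] by simp
      also have "\<dots> \<le> (phi hh (card (TT u L M)) - 1) + (\<Sum>i\<in>{..KK}-{M}. phi hh (card (TT u L i)))"
        by (intro add_mono Mdec sum_mono Tle)
      also have "\<dots> = (\<Sum>i\<le>KK. phi hh (card (TT u L i))) - 1"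
        using sum.remove[OF _ MI, of "\<lambda>i. phi hh (card (TT u L i))"] by simp
      finally show ?thesis unfolding Pot_def v(4) using cL indle by simp
    next
      case nopos: False
      obtain p where p: "p \<in> center_edges V E ell L v" "u \<in> p" using hub by blast
      obtain a b P where ab: "p = {a,b}" "a \<in> V" "b \<in> V" "\<not> covered V E ell L a b"
        "shortest_path V E ell a b P" "v \<in> set P" using sp_of_ce[OF p(1)] by blast
      have "p \<in> uncovered V E ell L" using p(1) ce_unc by blast
      hence "distp p = 0" using nopos by blast
      hence "dist V E ell a b = 0" using distp_pair ab(1) by simp
      hence abe: "a = b" using dist0_eq ab(2,3) by blast
      hence "P = [a]" using sp_self ab(5) by simp
      hence "v = a" using ab(6) by simp
      have ua: "u = a" using p(2) ab(1) abe by simp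
      have pu: "p = {u}" using ab(1) abe ua by simp
      have i1: "{u} \<in> uncovered V E ell L" using p(1) ce_unc pu by blast
      have i0: "{u} \<notin> uncovered V E ell ?L'" using ce_covered p(1) pu by blast
      show ?thesis unfolding Pot_def v(4) using cL sumle i1 i0 by simp
    qed
  qed
qed

lemma pot_inv: "dHHL_reach V E ell st \<Longrightarrow> u \<in> V \<Longrightarrow>
   Pot u (fst st) \<le> real (KK + 1) * phi hh (card V * card V) + 1"
proof (induction rule: dHHL_reach.induct)
  case init
  have "(\<Sum>i\<le>KK. phi hh (card (TT u (\<lambda>_. {}) i))) \<le> (\<Sum>i\<le>KK. phi hh (card V * card V))"
    by (intro sum_mono phi_mono cardTT) (use hh1 in simp)
  thus ?case unfolding Pot_def by simp
next
  case (step st st')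
  obtain L S where st: "st = (L, S)" by (cases st)
  have "Pot u (fst st') \<le> Pot u L" using pot_step step.hyps step.prems unfolding st by blast
  thus ?case using step.IH step.prems st by simp
qed

lemma final_bound: assumes "dHHL_output V E ell L" "u \<in> V"
  shows "real (card (L u)) \<le> real (KK + 1) * phi hh (card V * card V) + 1"
proof -
  obtain S where S: "dHHL_reach V E ell (L, S)" using assms(1) unfolding dHHL_output_def by blast
  have "Pot u L \<le> real (KK + 1) * phi hh (card V * card V) + 1" using pot_inv[OF S assms(2)] by simp
  moreover have "0 \<le> (\<Sum>i\<le>KK. phi hh (card (TT u L i)))" by (intro sum_nonneg phi_nonneg) (use hh1 in simp)
  moreover have "real (card (L u)) + (\<Sum>i\<le>KK. phi hh (card (TT u L i))) \<le> Pot u L"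
    unfolding Pot_def by simp
  ultimately show ?thesis by linarith
qed

end
theorem mainTheorem2:
  shows "\<exists>c>0. \<forall>(V::nat set) E ell L v.
     wf_network V E ell \<and> connected_net V E \<and> card V \<ge> 2 \<and>
     (\<forall>e\<in>E. ell e \<ge> 1) \<and> dHHL_output V E ell L \<and> v \<in> V \<longrightarrow>
     real (card (L v)) \<le> c * real (highway_dim V E ell) * log 2 (real (card V))
                          * log 2 (max 2 (diameter V E ell))"
proof (intro exI[of _ 7] conjI allI impI)
  show "(0::real) < 7" by simp
  fix V E ell L v
  assume A: "wf_network V E ell \<and> connected_net V E \<and> card V \<ge> 2 \<and>
     (\<forall>e\<in>E. ell e \<ge> 1) \<and> dHHL_output V E ell L \<and> v \<in> V"
  interpret N: net V E ell using A by unfold_locales auto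
  define n where "n = card V"
  define h where "h = N.hh"
  define a where "a = log 2 (real n)"
  define b where "b = log 2 (max 2 (diameter V E ell))"
  have n2: "2 \<le> real n" unfolding n_def using A by simp
  have h1: "1 \<le> h" unfolding h_def using N.hh1 .
  have fb: "real (card (L v)) \<le> real (N.KK + 1) * phi h (n * n) + 1"
    using N.final_bound A unfolding h_def n_def by blast
  have lnn: "ln (real (n * n)) = 2 * ln (real n)" using n2 by (simp add: ln_mult_pos)
  have nn0: "n * n \<noteq> 0" using n2 by simp
  have phieq: "phi h (n * n) = 2 * h * ln (real n) + 1" unfolding phi_def using nn0 lnn by simp
  have a1: "1 \<le> a" unfolding a_def using n2 by simp
  have b1: "1 \<le> b" unfolding b_def by simp
  have ln2: "ln (2::real) \<le> 1" using ln_2_less_1 by simp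
  have lnpos: "0 \<le> ln (real n)" using n2 by simp
  have "ln (real n) = a * ln 2" unfolding a_def log_def by simp
  hence lna: "ln (real n) \<le> a" using a1 ln2 mult_left_mono[OF ln2, of a] by simp
  have KK: "real N.KK \<le> b" unfolding N.KK_def b_def
    using b1 unfolding b_def by linarith
  have ha1: "1 \<le> h * a" using h1 a1 by (metis mult_mono' mult_1 zero_le_one order_trans)
  have X: "2 * h * ln (real n) + 1 \<le> 3 * (h * a)"
  proof -
    have "2 * h * ln (real n) \<le> 2 * h * a" using lna h1 by simp
    thus ?thesis using ha1 by linarith
  qed
  have Kb: "real (N.KK + 1) \<le> 2 * b" using KK b1 by simp
  have "real (N.KK + 1) * phi h (n * n) \<le> (2 * b) * (3 * (h * a))"
    unfolding phieq by (rule mult_mono[OF Kb X]) (use b1 in simp, use h1 lnpos in simp)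
  moreover have "1 \<le> h * a * b" using ha1 b1 by (metis mult_mono' mult_1 zero_le_one order_trans)
  ultimately have "real (card (L v)) \<le> 7 * h * a * b" using fb by (simp add: algebra_simps)
  thus "real (card (L v)) \<le> 7 * real (highway_dim V E ell) * log 2 (real (card V))
                          * log 2 (max 2 (diameter V E ell))"
    unfolding h_def N.hh_def a_def b_def n_def .
qed

end
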